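(* Let $n \ge 4$ and let $FQ_n$, $M_0$, $M_1$, $M_2$ be as defined in the context. Let $M$ be a perfect matching of $FQ_n$ such that $M \subseteq M_0 \cup M_1 \cup M_2$ and $M \neq M_i$ for every $i \in \{0,1,2\}$. Then the graph $FQ_n - M$ (obtained by deleting the edges of $M$, keeping all vertices) is not isomorphic to the hypercube $Q_n$.
   Context: The hypercube $Q_n$ has vertex set $\{0,1\}^n$, with $x=(x_1,\dots,x_n)$ and $y$ adjacent iff they differ in exactly one coordinate. For $x \in \{0,1\}^n$ let $\overline{x}$ denote the complement of $x$, i.e. every coordinate is flipped. The folded hypercube $FQ_n$ is the graph on $\{0,1\}^n$ whose edge set consists of all edges of $Q_n$ together with all edges $\{x,\overline{x}\}$ for $x \in \{0,1\}^n$ (these are called complement edges). Define the following edge sets of $FQ_n$: $M_1$ is the set of pairs $\{x,y\}$ differing exactly in coordinate $n$; $M_2 = \{\{x,\overline{x}\} : x \in \{0,1\}^n\}$; $M_0$ is the set of pairs $\{x,y\}$ differing exactly in coordinate $n-1$. *)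

theory Defs
  imports Main
begin

text \<open>Vertices of Q_n and FQ_n: boolean lists of length n. Coordinate k (1-based, as in
  the paper) is the list index k-1. Edges are represented as two-element sets.\<close>

definition cube_verts :: "nat \<Rightarrow> bool list set" where
  "cube_verts n = {x. length x = n}"

definition differ_exactly :: "nat \<Rightarrow> nat \<Rightarrow> bool list \<Rightarrow> bool list \<Rightarrow> bool" where
  "differ_exactly n i x y \<longleftrightarrow> length x = n \<and> length y = n \<and> i < n \<and> x ! i \<noteq> y ! i
     \<and> (\<forall>j<n. j \<noteq> i \<longrightarrow> x ! j = y ! j)"

definition compl :: "bool list \<Rightarrow> bool list" where
  "compl x = map Not x"

definition dim_edges :: "nat \<Rightarrow> nat \<Rightarrow> bool list set set" where
  "dim_edges n i = {{x, y} | x y. differ_exactly n i x y}"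

definition Q_edges :: "nat \<Rightarrow> bool list set set" where
  "Q_edges n = (\<Union>i<n. dim_edges n i)"

definition compl_edges :: "nat \<Rightarrow> bool list set set" where
  "compl_edges n = {{x, compl x} | x. x \<in> cube_verts n}"

definition FQ_edges :: "nat \<Rightarrow> bool list set set" where
  "FQ_edges n = Q_edges n \<union> compl_edges n"

text \<open>M_1: differ exactly in coordinate n (index n-1); M_0: coordinate n-1 (index n-2);
  M_2: complement edges.\<close>
definition M1 :: "nat \<Rightarrow> bool list set set" where "M1 n = dim_edges n (n - 1)"
definition M0 :: "nat \<Rightarrow> bool list set set" where "M0 n = dim_edges n (n - 2)"
definition M2 :: "nat \<Rightarrow> bool list set set" where "M2 n = compl_edges n"

definition perfect_matching :: "'a set \<Rightarrow> 'a set set \<Rightarrow> 'a set set \<Rightarrow> bool" where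
  "perfect_matching V E M \<longleftrightarrow> M \<subseteq> E \<and> (\<forall>v\<in>V. \<exists>!e. e \<in> M \<and> v \<in> e)"

definition graph_iso :: "'a set \<Rightarrow> 'a set set \<Rightarrow> 'b set \<Rightarrow> 'b set set \<Rightarrow> bool" where
  "graph_iso V1 E1 V2 E2 \<longleftrightarrow> (\<exists>f. bij_betw f V1 V2 \<and>
     (\<forall>x\<in>V1. \<forall>y\<in>V1. {x, y} \<in> E1 \<longleftrightarrow> {f x, f y} \<in> E2))"

end

theory Submission
  imports Defs
begin

definition tog :: "nat set \<Rightarrow> bool list \<Rightarrow> bool list" where
  "tog S x = map (\<lambda>j. x!j \<noteq> (j\<in>S)) [0..<length x]"

definition sd :: "nat set \<Rightarrow> nat set \<Rightarrow> nat set" where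
  "sd S T = (S - T) \<union> (T - S)"

definition Dn :: "nat \<Rightarrow> nat set set" where
  "Dn n = {{k}|k. k<n} \<union> {{..<n}}"

lemma length_tog[simp]: "length (tog S x) = length x"
  by (simp add: tog_def)

lemma nth_tog[simp]: "j < length x \<Longrightarrow> tog S x ! j = (x!j \<noteq> (j\<in>S))"
  by (simp add: tog_def)

lemma tog_tog: "tog T (tog S x) = tog (sd S T) x"
  by (rule nth_equalityI) (auto simp: sd_def)

lemma tog_self[simp]: "tog S (tog S x) = x"
  by (rule nth_equalityI) auto

lemma tog_empty[simp]: "tog {} x = x"
  by (rule nth_equalityI) auto

lemma tog_eq_iff: "tog S x = tog T x \<longleftrightarrow> (\<forall>j<length x. (j\<in>S) = (j\<in>T))"
proof
  assume "tog S x = tog T x"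
  then have "\<forall>j<length x. tog S x ! j = tog T x ! j" by simp
  then show "\<forall>j<length x. (j\<in>S) = (j\<in>T)" by auto
next
  assume "\<forall>j<length x. (j\<in>S) = (j\<in>T)"
  then show "tog S x = tog T x" by (intro nth_equalityI) auto
qed

lemma tog_eq_sub: "S \<subseteq> {..<length x} \<Longrightarrow> T \<subseteq> {..<length x} \<Longrightarrow> tog S x = tog T x \<longleftrightarrow> S = T"
  unfolding tog_eq_iff by auto

lemma tog_swap: "y = tog S x \<longleftrightarrow> x = tog S y"
  by auto

lemma differ_tog: "differ_exactly n i x y \<longleftrightarrow> length x = n \<and> i < n \<and> y = tog {i} x"
proof
  assume d: "differ_exactly n i x y"
  show "length x = n \<and> i < n \<and> y = tog {i} x"
    using d unfolding differ_exactly_def by (auto intro!: nth_equalityI)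
next
  assume "length x = n \<and> i < n \<and> y = tog {i} x"
  then show "differ_exactly n i x y" unfolding differ_exactly_def by auto
qed

lemma compl_tog: "compl x = tog {..<length x} x"
  unfolding compl_def by (rule nth_equalityI) auto

lemma dim_edges_iff: "{x,y} \<in> dim_edges n i \<longleftrightarrow> length x = n \<and> i < n \<and> y = tog {i} x"
proof
  assume "{x,y} \<in> dim_edges n i"
  then obtain a b where e: "{x,y} = {a,b}" and d: "differ_exactly n i a b"
    unfolding dim_edges_def by blast
  from d have d': "length a = n" "i < n" "b = tog {i} a" by (auto simp: differ_tog)
  from e show "length x = n \<and> i < n \<and> y = tog {i} x"
    unfolding doubleton_eq_iff using d' by auto
next
  assume "length x = n \<and> i < n \<and> y = tog {i} x"
  then have "differ_exactly n i x y" by (simp add: differ_tog)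
  then show "{x,y} \<in> dim_edges n i" unfolding dim_edges_def by blast
qed

lemma compl_edges_iff: "{x,y} \<in> compl_edges n \<longleftrightarrow> length x = n \<and> y = tog {..<n} x"
proof
  assume "{x,y} \<in> compl_edges n"
  then obtain a where e: "{x,y} = {a, compl a}" and d: "length a = n"
    unfolding compl_edges_def cube_verts_def by blast
  from e show "length x = n \<and> y = tog {..<n} x"
    unfolding doubleton_eq_iff compl_tog using d by auto
next
  assume "length x = n \<and> y = tog {..<n} x"
  then have "{x,y} = {x, compl x}" "x \<in> cube_verts n" by (auto simp: compl_tog cube_verts_def)
  then show "{x,y} \<in> compl_edges n" unfolding compl_edges_def by blast
qed

lemma Q_edges_iff: "{x,y} \<in> Q_edges n \<longleftrightarrow> length x = n \<and> (\<exists>k<n. y = tog {k} x)"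
  unfolding Q_edges_def using dim_edges_iff by blast

lemma FQ_edges_iff: "{x,y} \<in> FQ_edges n \<longleftrightarrow> length x = n \<and> (\<exists>S\<in>Dn n. y = tog S x)"
  unfolding FQ_edges_def Dn_def using Q_edges_iff[of x y n] compl_edges_iff[of x y n] by blast

lemma FQ_edge_shape: "e \<in> FQ_edges n \<Longrightarrow> \<exists>x y. e = {x,y} \<and> length x = n \<and> length y = n"
  unfolding FQ_edges_def Q_edges_def dim_edges_def compl_edges_def
  by (auto simp: differ_exactly_def cube_verts_def compl_def) (metis length_map)

lemma Dn_sub: "S \<in> Dn n \<Longrightarrow> S \<subseteq> {..<n}"
  unfolding Dn_def by auto

lemma c2: "card (sd {c} {d}) \<le> 2"
proof -
  have "sd {c} {d} \<subseteq> {c,d}" by (auto simp: sd_def)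
  then have "card (sd {c} {d}) \<le> card {c,d}" by (rule card_mono[rotated]) simp
  also have "\<dots> \<le> 2" by (simp add: card_insert_le_m1)
  finally show ?thesis .
qed

lemma sd_U: "c < n \<Longrightarrow> sd {c} {..<n} = {..<n} - {c}" "c < n \<Longrightarrow> sd {..<n} {c} = {..<n} - {c}"
  by (auto simp: sd_def)

lemma card_U: "c < n \<Longrightarrow> card ({..<n} - {c}) = n - 1" by simp

lemma sd_UU: "sd S S = {}" by (auto simp: sd_def)

lemma sd_comm: "sd S T = sd T S" by (auto simp: sd_def)

lemma comb:
  assumes n: "n \<ge> 4" and s: "S1 \<in> Dn n" "S2 \<in> Dn n" "S3 \<in> Dn n" "S4 \<in> Dn n"
    and ne: "S1 \<noteq> S2" and eq: "sd S1 S2 = sd S3 S4"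
  shows "S3 = S1 \<or> S3 = S2"
proof -
  have ne34: "S3 \<noteq> S4" using ne eq sd_UU[of S3] by (auto simp: sd_def)
  have big: "\<And>c d e. c < n \<Longrightarrow> {..<n} - {c} \<noteq> sd {d} {e}"
  proof
    fix c d e assume "c < n" "{..<n} - {c} = sd {d} {e}"
    then have "n - 1 \<le> 2" using c2[of d e] card_U[of c n] by simp
    then show False using n by simp
  qed
  show ?thesis
  proof (cases "S1 = {..<n}")
    case True
    then obtain b where b: "S2 = {b}" "b < n" using s ne unfolding Dn_def by auto
    show ?thesis
    proof (cases "S3 = {..<n}")
      case True then show ?thesis using \<open>S1 = _\<close> by simp
    next
      case False
      then obtain c where c: "S3 = {c}" "c < n" using s unfolding Dn_def by auto
      show ?thesis
      proof (cases "S4 = {..<n}")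
        case True
        then have "{..<n} - {b} = {..<n} - {c}" using eq b c \<open>S1 = _\<close> sd_U by simp
        then have "b = c" using b c by blast
        then show ?thesis using b c by simp
      next
        case False
        then obtain d where "S4 = {d}" using s unfolding Dn_def by auto
        then show ?thesis using big[of b c d] eq b c \<open>S1 = _\<close> sd_U by simp
      qed
    qed
  next
    case False
    then obtain a where a: "S1 = {a}" "a < n" using s unfolding Dn_def by auto
    show ?thesis
    proof (cases "S2 = {..<n}")
      case True
      show ?thesis
      proof (cases "S3 = {..<n}")
        case True then show ?thesis using \<open>S2 = _\<close> by simp
      next
        case False
        then obtain c where c: "S3 = {c}" "c < n" using s unfolding Dn_def by auto
        show ?thesis
        proof (cases "S4 = {..<n}")
          case True
          then have "{..<n} - {a} = {..<n} - {c}" using eq a c \<open>S2 = _\<close> sd_U by simp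
          then have "a = c" using a c by blast
          then show ?thesis using a c by simp
        next
          case False
          then obtain d where "S4 = {d}" using s unfolding Dn_def by auto
          then show ?thesis using big[of a c d] eq a c \<open>S2 = _\<close> sd_U by simp
        qed
      qed
    next
      case False
      then obtain b where b: "S2 = {b}" "b < n" using s unfolding Dn_def by auto
      have ab: "a \<noteq> b" using ne a b by auto
      have L: "sd S1 S2 = {a,b}" using a b ab by (auto simp: sd_def)
      show ?thesis
      proof (cases "S3 = {..<n}")
        case True
        then obtain d where d: "S4 = {d}" "d < n" using s ne34 unfolding Dn_def by auto
        then show ?thesis using big[of d a b] eq a b True sd_U by (simp add: sd_comm)
      next
        case False
        then obtain c where c: "S3 = {c}" "c < n" using s unfolding Dn_def by auto
        show ?thesis
        proof (cases "S4 = {..<n}")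
          case True
          then show ?thesis using big[of c a b] eq a b c sd_U by (simp add: sd_comm)
        next
          case False
          then obtain d where d: "S4 = {d}" using s unfolding Dn_def by auto
          have "c \<in> sd S3 S4" using c d ne34 by (auto simp: sd_def)
          then have "c \<in> {a,b}" using L eq by simp
          then show ?thesis using a b c by auto
        qed
      qed
    qed
  qed
qed


definition dd :: "nat \<Rightarrow> nat \<Rightarrow> nat set" where
  "dd n i = (if i = 0 then {n-2} else if i = 1 then {n-1} else {..<n})"

definition MM :: "nat \<Rightarrow> nat \<Rightarrow> bool list set set" where
  "MM n i = {{x, tog (dd n i) x}|x. length x = n}"

lemma dim_edges_eq: "i < n \<Longrightarrow> dim_edges n i = {{x, tog {i} x}|x. length x = n}"
  unfolding dim_edges_def differ_tog by blast

lemma compl_edges_eq: "compl_edges n = {{x, tog {..<n} x}|x. length x = n}"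
  unfolding compl_edges_def cube_verts_def compl_tog by auto

lemma MM_eq: "n \<ge> 4 \<Longrightarrow> M0 n = MM n 0 \<and> M1 n = MM n 1 \<and> M2 n = MM n 2"
  unfolding M0_def M1_def M2_def MM_def dd_def
  by (simp add: dim_edges_eq compl_edges_eq)

lemma dd_Dn: "n \<ge> 4 \<Longrightarrow> dd n i \<in> Dn n"
  unfolding dd_def Dn_def by auto

lemma sd_sub: "S \<subseteq> U \<Longrightarrow> T \<subseteq> U \<Longrightarrow> sd S T \<subseteq> U"
  by (auto simp: sd_def)

lemma Q_sq:
  assumes "{u,v} \<in> Q_edges n" "{v,w} \<in> Q_edges n" "u \<noteq> w"
  shows "\<exists>v'. v' \<noteq> v \<and> {u,v'} \<in> Q_edges n \<and> {v',w} \<in> Q_edges n"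
proof -
  obtain k where k: "k < n" "v = tog {k} u" "length u = n" using assms(1) Q_edges_iff by blast
  obtain j where j: "j < n" "w = tog {j} v" "length v = n" using assms(2) Q_edges_iff by blast
  have kj: "k \<noteq> j" using assms(3) j k by auto
  define v' where "v' = tog {j} u"
  have jk: "{j,k}-{k} = {j}" "{k,j}-{k} = {j}" using kj by auto
  have "v' = tog {k,j} v" using k kj jk unfolding v'_def
    by (simp add: tog_tog sd_def insert_commute)
  then have "v' \<noteq> v" using tog_eq_sub[of "{k,j}" v "{}"] j k by auto
  moreover have "{u,v'} \<in> Q_edges n" using Q_edges_iff k j unfolding v'_def by blast
  moreover have "w = tog {k} v'" using k j kj jk unfolding v'_def
    by (simp add: tog_tog sd_def insert_commute)
  then have "{v',w} \<in> Q_edges n" using Q_edges_iff k j unfolding v'_def by auto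
  ultimately show ?thesis by blast
qed

lemma to_tog: "length x = length y \<Longrightarrow> y = tog {m. m < length x \<and> x!m \<noteq> y!m} x"
  by (rule nth_equalityI) auto

context
  fixes n :: nat and M :: "bool list set set" and f :: "bool list \<Rightarrow> bool list"
  assumes n: "n \<ge> 4"
    and pm: "perfect_matching (cube_verts n) (FQ_edges n) M"
    and sub: "M \<subseteq> M0 n \<union> M1 n \<union> M2 n"
    and bij: "bij_betw f (cube_verts n) (cube_verts n)"
    and iso: "\<forall>x\<in>cube_verts n. \<forall>y\<in>cube_verts n. {x, y} \<in> FQ_edges n - M \<longleftrightarrow> {f x, f y} \<in> Q_edges n"
begin

lemma LA: "length x = n \<Longrightarrow> \<exists>i<3. {x, tog (dd n i) x} \<in> M"
proof -
  assume x: "length x = n"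
  then obtain e where e: "e \<in> M" "x \<in> e" using pm unfolding perfect_matching_def cube_verts_def by blast
  then have "e \<in> MM n 0 \<union> MM n 1 \<union> MM n 2" using sub MM_eq[OF n] by auto
  then obtain i where i0: "i < 3" "e \<in> MM n i"
  proof (elim UnE)
    assume "e \<in> MM n 0" then show ?thesis using that[of 0] by simp
  next
    assume "e \<in> MM n 1" then show ?thesis using that[of 1] by simp
  next
    assume "e \<in> MM n 2" then show ?thesis using that[of 2] by simp
  qed
  then obtain y where i: "i < 3" "e = {y, tog (dd n i) y}" unfolding MM_def by blast
  then have "e = {x, tog (dd n i) x}" using e(2) by (auto simp: insert_commute)
  then show ?thesis using i e by blast
qed

lemma LB: "{x, tog (dd n i) x} \<in> M \<Longrightarrow> {x,z} \<in> M \<Longrightarrow> length x = n \<Longrightarrow> z = tog (dd n i) x"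
proof -
  assume a: "{x, tog (dd n i) x} \<in> M" "{x,z} \<in> M" "length x = n"
  then have "\<exists>!e. e \<in> M \<and> x \<in> e" using pm unfolding perfect_matching_def cube_verts_def by blast
  then have "{x,z} = {x, tog (dd n i) x}" using a by blast
  then show ?thesis by (auto simp: doubleton_eq_iff)
qed

lemma LC:
  assumes x: "length x = n" and P: "{x, tog (dd n i) x} \<in> M" and S: "S \<in> Dn n" and Sne: "S \<noteq> dd n i"
  shows "{tog S x, tog (dd n i) (tog S x)} \<in> M"
proof (rule ccontr)
  assume nP: "\<not> ?thesis"
  define q where "q = tog (dd n i) x"
  define s where "s = tog S x"
  define r where "r = tog (dd n i) s"
  have D: "dd n i \<in> Dn n" using dd_Dn[OF n] .
  have Ssub: "S \<subseteq> {..<length x}" and Dsub: "dd n i \<subseteq> {..<length x}" using Dn_sub S D x by auto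
  have r_eq: "r = tog (sd S (dd n i)) x" unfolding r_def s_def by (simp add: tog_tog)
  have xr: "x \<noteq> r"
  proof
    assume "x = r"
    then have "tog {} x = tog (sd S (dd n i)) x" using r_eq by simp
    then have "{} = sd S (dd n i)" using tog_eq_sub[of "{}" x "sd S (dd n i)"] sd_sub[OF Ssub Dsub] by simp
    then show False using Sne by (auto simp: sd_def)
  qed
  have xs: "{x,s} \<in> FQ_edges n - M"
  proof
    show "{x,s} \<in> FQ_edges n" using FQ_edges_iff x S unfolding s_def by blast
    show "{x,s} \<notin> M"
    proof
      assume "{x,s} \<in> M"
      then have "s = q" using LB[OF P _ x] unfolding q_def by simp
      then show False using tog_eq_sub[OF Ssub Dsub] Sne unfolding s_def q_def by simp
    qed
  qed
  have sr: "{s,r} \<in> FQ_edges n - M"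
  proof
    show "{s,r} \<in> FQ_edges n" using FQ_edges_iff x D unfolding s_def r_def by auto
    show "{s,r} \<notin> M" using nP unfolding s_def r_def by simp
  qed
  have uniq: "w = s" if w1: "{x,w} \<in> FQ_edges n - M" and w2: "{w,r} \<in> FQ_edges n - M" for w
  proof -
    obtain S3 where S3: "S3 \<in> Dn n" "w = tog S3 x" using w1 FQ_edges_iff by blast
    obtain S4 where S4: "S4 \<in> Dn n" "r = tog S4 w" using w2 FQ_edges_iff by blast
    have "tog (sd S (dd n i)) x = tog (sd S3 S4) x" using r_eq S3 S4 by (simp add: tog_tog)
    then have "sd S (dd n i) = sd S3 S4"
      using tog_eq_sub sd_sub[OF Ssub Dsub] sd_sub[of S3 "{..<length x}" S4] Dn_sub S3 S4 x by metis
    then have "S3 = S \<or> S3 = dd n i" using comb[OF n S D S3(1) S4(1) Sne] by simp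
    moreover have "S3 \<noteq> dd n i"
    proof
      assume "S3 = dd n i"
      then have "{x,w} \<in> M" using S3 P by simp
      then show False using w1 by simp
    qed
    ultimately show ?thesis using S3 unfolding s_def by simp
  qed
  have V: "x \<in> cube_verts n" "s \<in> cube_verts n" "r \<in> cube_verts n"
    using x unfolding cube_verts_def s_def r_def by auto
  have Q1: "{f x, f s} \<in> Q_edges n" and Q2: "{f s, f r} \<in> Q_edges n" using iso V xs sr by auto
  have "f x \<noteq> f r" using bij V xr unfolding bij_betw_def inj_on_def by blast
  then obtain v' where v': "v' \<noteq> f s" "{f x, v'} \<in> Q_edges n" "{v', f r} \<in> Q_edges n"
    using Q_sq[OF Q1 Q2] by blast
  have "v' \<in> cube_verts n" using v'(2) Q_edges_iff[of "f x" v' n] unfolding cube_verts_def by auto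
  then obtain w where w: "w \<in> cube_verts n" "v' = f w" using bij unfolding bij_betw_def by auto
  have "{x,w} \<in> FQ_edges n - M" "{w,r} \<in> FQ_edges n - M" using iso V w v' by auto
  then have "w = s" using uniq by blast
  then show False using w v' by simp
qed

lemma LD:
  assumes x: "length x = n" and P: "{x, tog (dd n i) x} \<in> M" and k: "k < n"
  shows "{tog {k} x, tog (dd n i) (tog {k} x)} \<in> M"
proof (cases "{k} = dd n i")
  case True
  then show ?thesis using P by (simp add: insert_commute)
next
  case False
  then show ?thesis using LC[OF x P _ False] k unfolding Dn_def by blast
qed

lemma LE:
  assumes "finite T"
  shows "T \<subseteq> {..<n} \<Longrightarrow> length x = n \<Longrightarrow> {x, tog (dd n i) x} \<in> M
     \<Longrightarrow> {tog T x, tog (dd n i) (tog T x)} \<in> M"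
  using assms
proof (induction T rule: finite_induct)
  case empty
  then show ?case by simp
next
  case (insert k T)
  have "tog (insert k T) x = tog {k} (tog T x)"
    using insert(2) by (simp add: tog_tog sd_def insert_commute)
  then show ?case using LD[of "tog T x" i k] insert by simp
qed

lemma LF: "\<exists>i<3. M = MM n i"
proof -
  define x0 where "x0 = replicate n False"
  have x0: "length x0 = n" unfolding x0_def by simp
  obtain i where i: "i < 3" "{x0, tog (dd n i) x0} \<in> M" using LA[OF x0] by blast
  have all: "{y, tog (dd n i) y} \<in> M" if y: "length y = n" for y
  proof -
    have "y = tog {m. m < length x0 \<and> x0!m \<noteq> y!m} x0" by (rule to_tog) (simp add: x0 y)
    moreover have "{tog {m. m < length x0 \<and> x0!m \<noteq> y!m} x0,
        tog (dd n i) (tog {m. m < length x0 \<and> x0!m \<noteq> y!m} x0)} \<in> M"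
      by (rule LE) (use x0 i in auto)
    ultimately show ?thesis by simp
  qed
  have "M = MM n i"
  proof
    show "MM n i \<subseteq> M" unfolding MM_def using all by blast
    show "M \<subseteq> MM n i"
    proof
      fix e assume e: "e \<in> M"
      then have "e \<in> FQ_edges n" using pm unfolding perfect_matching_def by blast
      then obtain u v where uv: "e = {u,v}" "length u = n" using FQ_edge_shape by blast
      then have "v = tog (dd n i) u" using LB[OF all[OF uv(2)] _ uv(2)] e by simp
      then show "e \<in> MM n i" unfolding MM_def using uv by blast
    qed
  qed
  then show ?thesis using i by blast
qed

end


theorem theorem2:
  fixes n :: nat and M :: "bool list set set"
  assumes "n \<ge> 4"
    and "perfect_matching (cube_verts n) (FQ_edges n) M"
    and "M \<subseteq> M0 n \<union> M1 n \<union> M2 n"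
    and "M \<noteq> M0 n" and "M \<noteq> M1 n" and "M \<noteq> M2 n"
  shows "\<not> graph_iso (cube_verts n) (FQ_edges n - M) (cube_verts n) (Q_edges n)"
proof
  assume "graph_iso (cube_verts n) (FQ_edges n - M) (cube_verts n) (Q_edges n)"
  then obtain f where f: "bij_betw f (cube_verts n) (cube_verts n)"
    "\<forall>x\<in>cube_verts n. \<forall>y\<in>cube_verts n. {x, y} \<in> FQ_edges n - M \<longleftrightarrow> {f x, f y} \<in> Q_edges n"
    unfolding graph_iso_def by blast
  obtain i where i: "i < 3" "M = MM n i" using LF[OF assms(1-3) f] by blast
  then have "i = 0 \<or> i = 1 \<or> i = 2" by auto
  then show False using i MM_eq[OF assms(1)] assms(4-6) by auto
qed

end
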